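(* Let $n\ge 2$ be even. Consider the generalized $n$-gene repressilator system $$\dot r_i = a_i(p_{i-1}) - d_{r_i}(r_i),\qquad \dot p_i = k_i(r_i) - d_{p_i}(p_i),\qquad i=1,\dots,n,$$ (indices mod $n$), with functions satisfying the standing assumptions in the context, and let $x^*=(r_1^*,\dots,r_n^*,p_1^*,\dots,p_n^* )\in(0,\infty)^{2n}$ be a steady state. Then $x^*$ is locally asymptotically stable if and only if $\mathcal{D}>\mathcal{K}$, where $\mathcal{D}$ and $\mathcal{K}$ are evaluated at $x^*$.
   Context: Standing assumptions: each $a_i:[0,\infty)\to\mathbb{R}$ is $C^1$, nonnegative, strictly decreasing, with $a_i(0)>0$; each $d_{r_i}, d_{p_i}, k_i:[0,\infty)\to\mathbb{R}$ is $C^1$, vanishes at $0$, and is strictly increasing on $(0,\infty)$. At $x^*$ define $\partial_i^R := d_{r_i}'(r_i^* )$, $\partial_i^P := d_{p_i}'(p_i^* )$, the total degradation product $\mathcal{D}:=\prod_{i=1}^n \partial_i^R\partial_i^P$, the synthesis products $\mathcal{K}_i := k_i'(r_i^* )\,a_i'(p_{i-1}^* )$, and the total synthesis product $\mathcal{K}:=\prod_{i=1}^n\mathcal{K}_i$. A steady state is called (locally asymptotically) stable if every eigenvalue of the Jacobian matrix of the system at it has negative real part. *)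

theory Defs
  imports "HOL-Analysis.Analysis" "Jordan_Normal_Form.Char_Poly"
begin

definition C1_nonneg :: "(real \<Rightarrow> real) \<Rightarrow> bool" where
  "C1_nonneg f \<longleftrightarrow> (\<exists>f'. continuous_on {0..} f' \<and>
     (\<forall>x\<ge>0. (f has_real_derivative f' x) (at x within {0..})))"

text \<open>State vector of dimension 2n as a function nat => real:
  component i (i < n) is r_(i+1), component n+i (i < n) is p_(i+1).
  Indices 0-based, so p_(i-1) of gene i is component n + ((i + n - 1) mod n).\<close>
definition repressilator_field ::
  "nat \<Rightarrow> (nat \<Rightarrow> real \<Rightarrow> real) \<Rightarrow> (nat \<Rightarrow> real \<Rightarrow> real) \<Rightarrow> (nat \<Rightarrow> real \<Rightarrow> real)
   \<Rightarrow> (nat \<Rightarrow> real \<Rightarrow> real) \<Rightarrow> (nat \<Rightarrow> real) \<Rightarrow> (nat \<Rightarrow> real)" where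
  "repressilator_field n a dr dp k x = (\<lambda>i.
     if i < n then a i (x (n + (i + n - 1) mod n)) - dr i (x i)
     else k (i - n) (x (i - n)) - dp (i - n) (x i))"

definition jacobian :: "nat \<Rightarrow> ((nat \<Rightarrow> real) \<Rightarrow> (nat \<Rightarrow> real)) \<Rightarrow> (nat \<Rightarrow> real) \<Rightarrow> real mat" where
  "jacobian m F x = mat m m (\<lambda>(i, j). deriv (\<lambda>t. F (x(j := t)) i) (x j))"

definition stable_steady_state :: "nat \<Rightarrow> ((nat \<Rightarrow> real) \<Rightarrow> (nat \<Rightarrow> real)) \<Rightarrow> (nat \<Rightarrow> real) \<Rightarrow> bool" where
  "stable_steady_state m F x \<longleftrightarrow>
     (\<forall>e. eigenvalue (map_mat complex_of_real (jacobian m F x)) e \<longrightarrow> Re e < 0)"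

definition total_degradation :: "nat \<Rightarrow> (nat \<Rightarrow> real \<Rightarrow> real) \<Rightarrow> (nat \<Rightarrow> real \<Rightarrow> real) \<Rightarrow> (nat \<Rightarrow> real) \<Rightarrow> real" where
  "total_degradation n dr dp x = (\<Prod>i<n. deriv (dr i) (x i) * deriv (dp i) (x (n + i)))"

definition total_synthesis :: "nat \<Rightarrow> (nat \<Rightarrow> real \<Rightarrow> real) \<Rightarrow> (nat \<Rightarrow> real \<Rightarrow> real) \<Rightarrow> (nat \<Rightarrow> real) \<Rightarrow> real" where
  "total_synthesis n a k x = (\<Prod>i<n. deriv (k i) (x i) * deriv (a i) (x (n + (i + n - 1) mod n)))"

end

theory Submission
  imports Defs
begin

lemma cyc_prod:
  fixes d e u :: "nat \<Rightarrow> 'a::field"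
  assumes m: "m > 0"
    and eq: "\<And>t. t < m \<Longrightarrow> d t * u t = e t * u ((t + m - 1) mod m)"
    and dnz: "\<And>t. t < m \<Longrightarrow> d t \<noteq> 0"
    and t0: "t0 < m" "u t0 \<noteq> 0"
  shows "prod d {..<m} = prod e {..<m}"
proof -
  have bk: "u (t - 1) \<noteq> 0" if "0 < t" "t < m" "u t \<noteq> 0" for t
  proof -
    have "(t + m - 1) mod m = t - 1" using that by (simp add: mod_if)
    then show ?thesis using eq[of t] dnz[of t] that by auto
  qed
  have wrap: "u (m - 1) \<noteq> 0" if "u 0 \<noteq> 0"
    using eq[of 0] dnz[of 0] that m by auto
  have dn: "\<And>j. j \<le> s \<Longrightarrow> u (s - j) \<noteq> 0" if "s < m" "u s \<noteq> 0" for s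
  proof -
    fix j show "j \<le> s \<Longrightarrow> u (s - j) \<noteq> 0"
    proof (induction j)
      case 0 then show ?case using that by simp
    next
      case (Suc j)
      then have "u (s - j) \<noteq> 0" by simp
      moreover have "s - Suc j = (s - j) - 1" by simp
      ultimately show ?case using bk[of "s - j"] Suc.prems that by auto
    qed
  qed
  have u0: "u 0 \<noteq> 0" using dn[OF t0, of t0] by simp
  have allnz: "u t \<noteq> 0" if "t < m" for t
  proof -
    have "u (m - 1) \<noteq> 0" using wrap u0 by simp
    from dn[OF _ this, of "m - 1 - t"] that m show ?thesis by auto
  qed
  have bij: "bij_betw (\<lambda>t. (t + m - 1) mod m) {..<m} {..<m}"
  proof (rule bij_betw_byWitness[where f'="\<lambda>t. (t + 1) mod m"])
    show "\<forall>a\<in>{..<m}. (((a + m - 1) mod m) + 1) mod m = a"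
      using m by (auto simp: mod_if)
    show "\<forall>a\<in>{..<m}. ((a + 1) mod m + m - 1) mod m = a"
      using m by (auto simp: mod_if)
    show "(\<lambda>t. (t + m - 1) mod m) ` {..<m} \<subseteq> {..<m}" using m by auto
    show "(\<lambda>t. (t + 1) mod m) ` {..<m} \<subseteq> {..<m}" using m by auto
  qed
  have pu: "prod (\<lambda>t. u ((t + m - 1) mod m)) {..<m} = prod u {..<m}"
    using prod.reindex_bij_betw[OF bij, of u] by simp
  have "prod d {..<m} * prod u {..<m} = prod (\<lambda>t. d t * u t) {..<m}"
    by (simp add: prod.distrib)
  also have "\<dots> = prod (\<lambda>t. e t * u ((t + m - 1) mod m)) {..<m}"
    by (rule prod.cong) (auto simp: eq)
  also have "\<dots> = prod e {..<m} * prod u {..<m}"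
    by (simp only: prod.distrib pu)
  finally show ?thesis using allnz by (simp add: prod_zero_iff)
qed

fun csol :: "(nat \<Rightarrow> 'a::field) \<Rightarrow> (nat \<Rightarrow> 'a) \<Rightarrow> nat \<Rightarrow> nat \<Rightarrow> 'a" where
  "csol d e s 0 = (if s = 0 then 1 else 0)"
| "csol d e s (Suc t) = (if Suc t < s then 0 else if Suc t = s then 1
      else e (Suc t) * csol d e s t / d (Suc t))"

lemma csol_below: "t < s \<Longrightarrow> csol d e s t = 0"
  by (cases t) auto

lemma csol_at: "csol d e s s = 1"
  by (cases s) auto

lemma cyc_exists_e0:
  fixes d e :: "nat \<Rightarrow> 'a::field"
  assumes m: "m > 0" and e0: "e 0 = 0" and s0: "s0 < m" "d s0 = 0"
  shows "\<exists>u. (\<exists>t<m. u t \<noteq> 0) \<and> (\<forall>t<m. d t * u t = e t * u ((t + m - 1) mod m))"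
proof -
  define Z where "Z = {s. s < m \<and> d s = 0}"
  define s where "s = Max Z"
  have fZ: "finite Z" unfolding Z_def by auto
  have "s0 \<in> Z" using s0 unfolding Z_def by auto
  hence sZ: "s \<in> Z" unfolding s_def using fZ Max_in by blast
  hence sm: "s < m" and ds: "d s = 0" unfolding Z_def by auto
  have above: "d t \<noteq> 0" if "s < t" "t < m" for t
  proof
    assume "d t = 0"
    hence "t \<in> Z" using that unfolding Z_def by auto
    hence "t \<le> s" unfolding s_def using fZ by auto
    with that show False by simp
  qed
  define u where "u = csol d e s"
  have "\<forall>t<m. d t * u t = e t * u ((t + m - 1) mod m)"
  proof (intro allI impI)
    fix t assume tm: "t < m"
    show "d t * u t = e t * u ((t + m - 1) mod m)"
    proof (cases t)
      case 0
      then show ?thesis using e0 ds unfolding u_def by (cases s) auto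
    next
      case (Suc t')
      have pr: "(t + m - 1) mod m = t'" using Suc tm by simp
      consider "t < s" | "t = s" | "s < t" by linarith
      then show ?thesis
      proof cases
        case 1 then show ?thesis using pr Suc unfolding u_def by (simp add: csol_below)
      next
        case 2 then show ?thesis using pr Suc ds unfolding u_def by (simp add: csol_below)
      next
        case 3 then show ?thesis using pr Suc above[OF 3 tm] unfolding u_def by simp
      qed
    qed
  qed
  moreover have "u s \<noteq> 0" unfolding u_def by (simp add: csol_at)
  ultimately show ?thesis using sm by blast
qed

lemma modA: "t < m \<Longrightarrow> t0 < m \<Longrightarrow> ((t + m - t0) mod m + t0) mod m = (t::nat)"
proof (cases "t0 \<le> t")
  case True
  assume a: "t < m" "t0 < m"
  have "(t + m - t0) mod m = t - t0" using True a
    by (metis Nat.add_diff_assoc2 le_add_diff_inverse2 less_imp_diff_less mod_add_self2 mod_less)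
  then show ?thesis using True a by simp
next
  case False
  assume a: "t < m" "t0 < m"
  have "(t + m - t0) mod m = t + m - t0" using False a by simp
  then show ?thesis using False a by simp
qed

lemma modC: "t < m \<Longrightarrow> t0 < m \<Longrightarrow> ((t + t0) mod m + m - t0) mod m = (t::nat)"
proof (cases "t + t0 < m")
  case True
  assume a: "t < m" "t0 < m"
  then show ?thesis using True by simp
next
  case False
  assume a: "t < m" "t0 < m"
  have "(t + t0) mod m = t + t0 - m" using False a by (simp add: le_mod_geq)
  then show ?thesis using False a by simp
qed

lemma modB: "t < m \<Longrightarrow> t0 < m \<Longrightarrow>
   ((t + m - 1) mod m + m - t0) mod m = ((t + m - t0) mod m + m - 1) mod (m::nat)"
proof -
  assume a: "t < m" "t0 < m"
  have p: "(t + m - 1) mod m = (if t = 0 then m - 1 else t - 1)" using a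
    by (cases t) auto
  have q: "(t + m - t0) mod m = (if t0 \<le> t then t - t0 else t + m - t0)" using a
    by (auto simp: le_mod_geq)
  show ?thesis unfolding p q using a by (auto simp: le_mod_geq)
qed


lemma cyc_exists_zero:
  fixes d e :: "nat \<Rightarrow> 'a::field"
  assumes m: "m > 0" and e0: "t0 < m" "e t0 = 0" and s0: "s0 < m" "d s0 = 0"
  shows "\<exists>u. (\<exists>t<m. u t \<noteq> 0) \<and> (\<forall>t<m. d t * u t = e t * u ((t + m - 1) mod m))"
proof -
  define d' where "d' t = d ((t + t0) mod m)" for t
  define e' where "e' t = e ((t + t0) mod m)" for t
  have A: "((t + m - t0) mod m + t0) mod m = t" if "t < m" for t
    using modA that e0(1) .
  have C: "((t + t0) mod m + m - t0) mod m = t" if "t < m" for t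
    using modC that e0(1) .
  have B: "((t + m - 1) mod m + m - t0) mod m = ((t + m - t0) mod m + m - 1) mod m"
    if "t < m" for t
    using modB that e0(1) .
  have "e' 0 = 0" using e0 by (simp add: e'_def)
  moreover have "d' ((s0 + m - t0) mod m) = 0" using A[OF s0(1)] s0 by (simp add: d'_def)
  moreover have "(s0 + m - t0) mod m < m" using m by simp
  ultimately obtain u' where u'nz: "\<exists>t<m. u' t \<noteq> 0"
    and u'eq: "\<forall>t<m. d' t * u' t = e' t * u' ((t + m - 1) mod m)"
    using cyc_exists_e0[OF m, of e' _ d'] by blast
  define u where "u t = u' ((t + m - t0) mod m)" for t
  have "\<forall>t<m. d t * u t = e t * u ((t + m - 1) mod m)"
  proof (intro allI impI)
    fix t assume tm: "t < m"
    have "(t + m - t0) mod m < m" using m by simp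
    from u'eq[rule_format, OF this] show "d t * u t = e t * u ((t + m - 1) mod m)"
      unfolding d'_def e'_def u_def A[OF tm] B[OF tm] .
  qed
  moreover have "\<exists>t<m. u t \<noteq> 0"
  proof -
    from u'nz obtain t1 where "t1 < m" "u' t1 \<noteq> 0" by blast
    then show ?thesis using C[of t1] m unfolding u_def
      by (intro exI[of _ "(t1 + t0) mod m"]) auto
  qed
  ultimately show ?thesis by blast
qed

lemma cyc_exists_nz:
  fixes d e :: "nat \<Rightarrow> 'a::field"
  assumes m: "m > 0" and dnz: "\<And>t. t < m \<Longrightarrow> d t \<noteq> 0"
    and P: "prod d {..<m} = prod e {..<m}"
  shows "\<exists>u. (\<exists>t<m. u t \<noteq> 0) \<and> (\<forall>t<m. d t * u t = e t * u ((t + m - 1) mod m))"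
proof -
  obtain m' where m': "m = Suc m'" using m by (cases m) auto
  define u where "u t = (\<Prod>j<t. e (Suc j) / d (Suc j))" for t
  have "\<forall>t<m. d t * u t = e t * u ((t + m - 1) mod m)"
  proof (intro allI impI)
    fix t assume tm: "t < m"
    show "d t * u t = e t * u ((t + m - 1) mod m)"
    proof (cases t)
      case 0
      have pd: "prod d {..<m} = d 0 * (\<Prod>j<m'. d (Suc j))" unfolding m' prod.lessThan_Suc_shift ..
      have pe: "prod e {..<m} = e 0 * (\<Prod>j<m'. e (Suc j))" unfolding m' prod.lessThan_Suc_shift ..
      have nz: "(\<Prod>j<m'. d (Suc j)) \<noteq> 0" using dnz m' by (simp add: prod_zero_iff)
      have umd: "u m' = (\<Prod>j<m'. e (Suc j)) / (\<Prod>j<m'. d (Suc j))"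
        unfolding u_def by (simp add: prod_dividef)
      have um: "u m' * (\<Prod>j<m'. d (Suc j)) = (\<Prod>j<m'. e (Suc j))"
        using umd nz by simp
      have "d 0 * (\<Prod>j<m'. d (Suc j)) = (e 0 * u m') * (\<Prod>j<m'. d (Suc j))"
        using P pd pe um by (simp add: mult.assoc)
      hence "d 0 = e 0 * u m'" using nz by simp
      moreover have "(t + m - 1) mod m = m'" using 0 m' by simp
      ultimately show ?thesis using 0 by (simp add: u_def)
    next
      case (Suc t')
      have pr: "(t + m - 1) mod m = t'" using Suc tm by simp
      show ?thesis using pr Suc dnz[OF tm] unfolding u_def by (simp add: field_simps)
    qed
  qed
  moreover have "u 0 \<noteq> 0" by (simp add: u_def)
  ultimately show ?thesis using m by blast
qed

lemma cyc_exists: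
  fixes d e :: "nat \<Rightarrow> 'a::field"
  assumes m: "m > 0" and P: "prod d {..<m} = prod e {..<m}"
  shows "\<exists>u. (\<exists>t<m. u t \<noteq> 0) \<and> (\<forall>t<m. d t * u t = e t * u ((t + m - 1) mod m))"
proof (cases "\<forall>t<m. d t \<noteq> 0")
  case True then show ?thesis using cyc_exists_nz[OF m _ P] by blast
next
  case False
  then obtain s0 where s0: "s0 < m" "d s0 = 0" by blast
  hence "prod e {..<m} = 0" using P by (metis finite_lessThan lessThan_iff prod_zero_iff)
  then obtain t0 where t0: "t0 < m" "e t0 = 0" by (auto simp: prod_zero_iff)
  show ?thesis using cyc_exists_zero[where d=d and e=e, OF m t0 s0] by blast
qed

lemma C1_deriv:
  assumes "C1_nonneg f" "0 < x"
  shows "(f has_real_derivative deriv f x) (at x)"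
proof -
  obtain f' where f': "\<forall>x\<ge>0. (f has_real_derivative f' x) (at x within {0..})"
    using assms(1) unfolding C1_nonneg_def by blast
  have eq: "at x within {0..} = at x"
    by (rule at_within_interior) (use assms(2) in simp)
  have "(f has_real_derivative f' x) (at x within {0..})" using f' assms(2) by simp
  hence "(f has_real_derivative f' x) (at x)" using eq by simp
  thus ?thesis using DERIV_imp_deriv by metis
qed

lemma deriv_nonneg_mono:
  assumes "strict_mono_on {0<..} f" "(f has_real_derivative D) (at x)" "0 < x"
  shows "0 \<le> (D::real)"
proof (rule ccontr)
  assume "\<not> 0 \<le> D"
  then obtain d where d: "d > 0" "\<forall>h>0. h < d \<longrightarrow> f (x + h) < f x"
    using DERIV_neg_dec_right[OF assms(2)] by force
  have "f x < f (x + d/2)" using assms(1,3) d(1) by (auto simp: strict_mono_on_def)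
  moreover have "f (x + d/2) < f x" using d by simp
  ultimately show False by simp
qed

lemma deriv_nonpos_anti:
  assumes "\<And>x y. 0 \<le> x \<Longrightarrow> x < y \<Longrightarrow> f y < f x" "(f has_real_derivative D) (at x)" "0 < x"
  shows "(D::real) \<le> 0"
proof (rule ccontr)
  assume "\<not> D \<le> 0"
  then obtain d where d: "d > 0" "\<forall>h>0. h < d \<longrightarrow> f x < f (x + h)"
    using DERIV_pos_inc_right[OF assms(2)] by force
  have "f (x + d/2) < f x" using assms(1)[of x "x + d/2"] assms(3) d(1) by auto
  moreover have "f x < f (x + d/2)" using d by simp
  ultimately show False by simp
qed

lemma jac_entry:
  assumes n: "n > 0"
    and C1: "\<And>i. i < n \<Longrightarrow> C1_nonneg (a i) \<and> C1_nonneg (dr i) \<and> C1_nonneg (dp i) \<and> C1_nonneg (k i)"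
    and pos: "\<And>j. j < 2 * n \<Longrightarrow> xs j > 0"
    and ij: "i < 2 * n" "j < 2 * n"
  shows "jacobian (2 * n) (repressilator_field n a dr dp k) xs $$ (i, j) =
    (if i < n then (if j = i then - deriv (dr i) (xs i) else 0)
        + (if j = n + (i + n - 1) mod n then deriv (a i) (xs j) else 0)
     else (if j = i - n then deriv (k (i - n)) (xs j) else 0)
        + (if j = i then - deriv (dp (i - n)) (xs i) else 0))"
proof -
  have J: "jacobian (2 * n) (repressilator_field n a dr dp k) xs $$ (i, j) =
    deriv (\<lambda>t. repressilator_field n a dr dp k (xs(j := t)) i) (xs j)"
    unfolding jacobian_def using ij by simp
  show ?thesis
  proof (cases "i < n")
    case True
    define P where "P = n + (i + n - 1) mod n"
    have Pi: "P \<noteq> i" "P < 2 * n" using True n unfolding P_def by auto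
    have F: "(\<lambda>t. repressilator_field n a dr dp k (xs(j := t)) i) =
       (\<lambda>t. a i ((xs(j := t)) P) - dr i ((xs(j := t)) i))"
      unfolding repressilator_field_def P_def using True by simp
    have Ca: "(a i has_real_derivative deriv (a i) (xs P)) (at (xs P))"
      using C1_deriv C1 True pos Pi by blast
    have Cr: "(dr i has_real_derivative deriv (dr i) (xs i)) (at (xs i))"
      using C1_deriv C1 True pos ij by (meson less_trans n mult_2 trans_less_add1)
    consider "j = i" | "j = P" | "j \<noteq> i" "j \<noteq> P" by blast
    then show ?thesis
    proof cases
      case 1
      have "((\<lambda>t. a i (xs P) - dr i t) has_real_derivative 0 - deriv (dr i) (xs i)) (at (xs i))"
        by (intro DERIV_diff DERIV_const Cr)
      then show ?thesis using J F 1 Pi True unfolding P_def[symmetric]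
        by (simp add: DERIV_imp_deriv)
    next
      case 2
      have "((\<lambda>t. a i t - dr i (xs i)) has_real_derivative deriv (a i) (xs P) - 0) (at (xs P))"
        by (intro DERIV_diff DERIV_const Ca)
      then show ?thesis using J F 2 Pi True unfolding P_def[symmetric]
        by (simp add: DERIV_imp_deriv)
    next
      case 3
      then show ?thesis using J F True unfolding P_def[symmetric] by simp
    qed
  next
    case False
    define i' where "i' = i - n"
    have i': "i' < n" "i' \<noteq> i" "i = n + i'" using False ij n unfolding i'_def by auto
    have F: "(\<lambda>t. repressilator_field n a dr dp k (xs(j := t)) i) =
       (\<lambda>t. k i' ((xs(j := t)) i') - dp i' ((xs(j := t)) i))"
      unfolding repressilator_field_def i'_def using False by simp
    have Ck: "(k i' has_real_derivative deriv (k i') (xs i')) (at (xs i'))"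
      using C1_deriv C1 i' pos by (metis less_trans mult_2 trans_less_add1)
    have Cp: "(dp i' has_real_derivative deriv (dp i') (xs i)) (at (xs i))"
      using C1_deriv C1 i' pos ij by blast
    consider "j = i'" | "j = i" | "j \<noteq> i" "j \<noteq> i'" by blast
    then show ?thesis
    proof cases
      case 1
      have "((\<lambda>t. k i' t - dp i' (xs i)) has_real_derivative deriv (k i') (xs i') - 0) (at (xs i'))"
        by (intro DERIV_diff DERIV_const Ck)
      then show ?thesis using J F 1 i' False unfolding i'_def[symmetric]
        by (simp add: DERIV_imp_deriv)
    next
      case 2
      have "((\<lambda>t. k i' (xs i') - dp i' t) has_real_derivative 0 - deriv (dp i') (xs i)) (at (xs i))"
        by (intro DERIV_diff DERIV_const Cp)
      then show ?thesis using J F 2 i' False unfolding i'_def[symmetric]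
        by (simp add: DERIV_imp_deriv)
    next
      case 3
      then show ?thesis using J F False unfolding i'_def[symmetric] by simp
    qed
  qed
qed

definition ixf :: "nat \<Rightarrow> nat \<Rightarrow> nat" where
  "ixf n t = (if even t then t div 2 else n + t div 2)"
definition posf :: "nat \<Rightarrow> nat \<Rightarrow> nat" where
  "posf n j = (if j < n then 2 * j else 2 * (j - n) + 1)"

lemma ixf_lt: "t < 2 * n \<Longrightarrow> ixf n t < 2 * n"
  unfolding ixf_def by auto
lemma posf_lt: "j < 2 * n \<Longrightarrow> posf n j < 2 * n"
  unfolding posf_def by auto
lemma posf_ixf: "t < 2 * n \<Longrightarrow> posf n (ixf n t) = t"
  unfolding ixf_def posf_def by auto
lemma ixf_posf: "j < 2 * n \<Longrightarrow> ixf n (posf n j) = j"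
  unfolding ixf_def posf_def by auto

definition Af :: "nat \<Rightarrow> (nat \<Rightarrow> real \<Rightarrow> real) \<Rightarrow> (nat \<Rightarrow> real \<Rightarrow> real) \<Rightarrow> (nat \<Rightarrow> real) \<Rightarrow> nat \<Rightarrow> real" where
  "Af n dr dp xs t = (if even t then deriv (dr (t div 2)) (xs (t div 2))
                      else deriv (dp (t div 2)) (xs (n + t div 2)))"
definition Ef :: "nat \<Rightarrow> (nat \<Rightarrow> real \<Rightarrow> real) \<Rightarrow> (nat \<Rightarrow> real \<Rightarrow> real) \<Rightarrow> (nat \<Rightarrow> real) \<Rightarrow> nat \<Rightarrow> real" where
  "Ef n a k xs t = (if even t then deriv (a (t div 2)) (xs (n + (t div 2 + n - 1) mod n))
                      else deriv (k (t div 2)) (xs (t div 2)))"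

lemma prod_2n: "(\<Prod>t<2 * (n::nat). (f::nat \<Rightarrow> 'a::comm_monoid_mult) t) = (\<Prod>i<n. f (2 * i) * f (2 * i + 1))"
  by (induction n) (simp_all add: prod.lessThan_Suc mult_ac)

lemma mulvec:
  assumes n: "n > 0"
    and C1: "\<And>i. i < n \<Longrightarrow> C1_nonneg (a i) \<and> C1_nonneg (dr i) \<and> C1_nonneg (dp i) \<and> C1_nonneg (k i)"
    and pos: "\<And>j. j < 2 * n \<Longrightarrow> xs j > 0"
    and v: "v \<in> carrier_vec (2 * n)" and j: "j < 2 * n"
  shows "(map_mat complex_of_real (jacobian (2 * n) (repressilator_field n a dr dp k) xs) *\<^sub>v v) $ j =
    (if j < n then - of_real (deriv (dr j) (xs j)) * v $ j
        + of_real (deriv (a j) (xs (n + (j + n - 1) mod n))) * v $ (n + (j + n - 1) mod n)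
     else of_real (deriv (k (j - n)) (xs (j - n))) * v $ (j - n)
        - of_real (deriv (dp (j - n)) (xs j)) * v $ j)"
proof -
  let ?J = "jacobian (2 * n) (repressilator_field n a dr dp k) xs"
  have dimJ: "dim_row ?J = 2 * n" "dim_col ?J = 2 * n" unfolding jacobian_def by simp_all
  have "(map_mat complex_of_real ?J *\<^sub>v v) $ j =
      (\<Sum>l = 0..<2 * n. complex_of_real (?J $$ (j, l)) * v $ l)"
    using j v dimJ by (simp add: scalar_prod_def)
  also have "\<dots> = (\<Sum>l = 0..<2 * n. complex_of_real
    (if j < n then (if l = j then - deriv (dr j) (xs j) else 0)
        + (if l = n + (j + n - 1) mod n then deriv (a j) (xs l) else 0)
     else (if l = j - n then deriv (k (j - n)) (xs l) else 0)
        + (if l = j then - deriv (dp (j - n)) (xs j) else 0)) * v $ l)"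
    by (rule sum.cong) (use jac_entry[OF n C1 pos j] in auto)
  also have "\<dots> = (if j < n then - of_real (deriv (dr j) (xs j)) * v $ j
        + of_real (deriv (a j) (xs (n + (j + n - 1) mod n))) * v $ (n + (j + n - 1) mod n)
     else of_real (deriv (k (j - n)) (xs (j - n))) * v $ (j - n)
        - of_real (deriv (dp (j - n)) (xs j)) * v $ j)"
  proof (cases "j < n")
    case True
    have P: "n + (j + n - 1) mod n < 2 * n" using n by simp
    show ?thesis using True j P
      by (simp add: distrib_right sum.distrib if_distrib[of "\<lambda>x. complex_of_real x * _"] cong: if_cong)
  next
    case False
    show ?thesis using False j
      by (simp add: distrib_right sum.distrib if_distrib[of "\<lambda>x. complex_of_real x * _"] cong: if_cong)
  qed
  finally show ?thesis .
qed

lemma lin1: "(- A * x + B * y = l * x) \<longleftrightarrow> ((l + A) * x = B * (y::complex))"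
  by (metis (no_types, lifting) add.commute add_diff_cancel_left' diff_add_cancel distrib_right minus_mult_left uminus_add_conv_diff)
lemma lin1b: "(- A * x + B * y = l * x) \<longleftrightarrow> ((l + A) * x = B * (y::complex))"
  by (auto simp: algebra_simps)
lemma lin2: "(K * y - B * x = l * x) \<longleftrightarrow> ((l + B) * x = K * (y::complex))"
  by (auto simp: algebra_simps)

lemma eig_cyc:
  assumes n: "n > 0"
    and C1: "\<And>i. i < n \<Longrightarrow> C1_nonneg (a i) \<and> C1_nonneg (dr i) \<and> C1_nonneg (dp i) \<and> C1_nonneg (k i)"
    and pos: "\<And>j. j < 2 * n \<Longrightarrow> xs j > 0"
    and v: "v \<in> carrier_vec (2 * n)" and u: "\<And>t. t < 2 * n \<Longrightarrow> u t = v $ ixf n t"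
  shows "(map_mat complex_of_real (jacobian (2 * n) (repressilator_field n a dr dp k) xs) *\<^sub>v v = l \<cdot>\<^sub>v v)
     \<longleftrightarrow> (\<forall>t<2 * n. (l + of_real (Af n dr dp xs t)) * u t
            = of_real (Ef n a k xs t) * u ((t + 2 * n - 1) mod (2 * n)))"
proof -
  let ?J = "map_mat complex_of_real (jacobian (2 * n) (repressilator_field n a dr dp k) xs)"
  define E where "E j \<longleftrightarrow> (?J *\<^sub>v v) $ j = l * v $ j" for j
  have dimJ: "dim_row ?J = 2 * n" unfolding jacobian_def by simp
  have "(?J *\<^sub>v v = l \<cdot>\<^sub>v v) \<longleftrightarrow> (\<forall>j<2 * n. E j)"
    unfolding E_def using v dimJ by (auto simp: vec_eq_iff)
  also have "\<dots> \<longleftrightarrow> (\<forall>t<2 * n. E (ixf n t))"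
    using ixf_lt ixf_posf posf_lt by metis
  also have "\<dots> \<longleftrightarrow> (\<forall>t<2 * n. (l + of_real (Af n dr dp xs t)) * u t
            = of_real (Ef n a k xs t) * u ((t + 2 * n - 1) mod (2 * n)))"
  proof (intro all_cong1 imp_cong refl)
    fix t assume t: "t < 2 * n"
    show "E (ixf n t) \<longleftrightarrow> (l + of_real (Af n dr dp xs t)) * u t
            = of_real (Ef n a k xs t) * u ((t + 2 * n - 1) mod (2 * n))"
    proof (cases "even t")
      case True
      define i where "i = t div 2"
      have ti: "t = 2 * i" "i < n" using True t unfolding i_def by auto
      have pr: "(t + 2 * n - 1) mod (2 * n) = 2 * ((i + n - 1) mod n) + 1"
      proof (cases "i = 0")
        case True then show ?thesis using ti n by simp
      next
        case False
        have a1: "i + n - 1 = (i - 1) + n" "2 * i + 2 * n - 1 = (2 * i - 1) + 2 * n"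
          using False by auto
        have "(i + n - 1) mod n = i - 1" unfolding a1 using ti by simp
        moreover have "(t + 2 * n - 1) mod (2 * n) = 2 * i - 1" unfolding ti(1) a1 using ti by simp
        ultimately show ?thesis using False by simp
      qed
      have ix: "ixf n t = i" "ixf n (2 * ((i + n - 1) mod n) + 1) = n + (i + n - 1) mod n"
        unfolding ixf_def using ti by auto
      have "(i + n - 1) mod n < n" using n by simp
      hence ul: "u ((t + 2 * n - 1) mod (2 * n)) = v $ (n + (i + n - 1) mod n)"
        using u[of "2 * ((i + n - 1) mod n) + 1"] pr ix by simp
      have ut: "u t = v $ i" using u t ix by simp
      have i2: "i < 2 * n" using ti by simp
      note M = mulvec[where a=a and dr=dr and dp=dp and k=k and xs=xs, OF n C1 pos v i2]
      have M': "(?J *\<^sub>v v) $ i = - of_real (deriv (dr i) (xs i)) * v $ i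
        + of_real (deriv (a i) (xs (n + (i + n - 1) mod n))) * v $ (n + (i + n - 1) mod n)"
        using M ti(2) by simp
      have AE: "Af n dr dp xs t = deriv (dr i) (xs i)"
        "Ef n a k xs t = deriv (a i) (xs (n + (i + n - 1) mod n))"
        unfolding Af_def Ef_def using ti by auto
      show ?thesis unfolding E_def ix(1) M' lin1 ul ut AE ..
    next
      case False
      define i where "i = t div 2"
      have ti: "t = 2 * i + 1" "i < n" using False t unfolding i_def by auto
      have pr: "(t + 2 * n - 1) mod (2 * n) = 2 * i" using ti by simp
      have ix: "ixf n t = n + i" "ixf n (2 * i) = i" unfolding ixf_def using ti by auto
      have ul: "u ((t + 2 * n - 1) mod (2 * n)) = v $ i" using u[of "2 * i"] pr ix ti by simp
      have ut: "u t = v $ (n + i)" using u t ix by simp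
      have i2: "n + i < 2 * n" using ti by simp
      note M = mulvec[where a=a and dr=dr and dp=dp and k=k and xs=xs, OF n C1 pos v i2]
      have M': "(?J *\<^sub>v v) $ (n + i) = of_real (deriv (k i) (xs i)) * v $ i
        - of_real (deriv (dp i) (xs (n + i))) * v $ (n + i)"
        using M ti(2) by simp
      have AE: "Af n dr dp xs t = deriv (dp i) (xs (n + i))"
        "Ef n a k xs t = deriv (k i) (xs i)"
        unfolding Af_def Ef_def using ti by auto
      show ?thesis unfolding E_def ix(1) M' lin2 ul ut AE ..
    qed
  qed
  finally show ?thesis .
qed

theorem theorem2:
  fixes n :: nat
    and a dr dp k :: "nat \<Rightarrow> real \<Rightarrow> real"
    and xs :: "nat \<Rightarrow> real"
  assumes "n \<ge> 2" and "even n"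
    and a_C1: "\<And>i. i < n \<Longrightarrow> C1_nonneg (a i)"
    and a_nonneg: "\<And>i x. i < n \<Longrightarrow> 0 \<le> x \<Longrightarrow> 0 \<le> a i x"
    and a_decr: "\<And>i x y. i < n \<Longrightarrow> 0 \<le> x \<Longrightarrow> x < y \<Longrightarrow> a i y < a i x"
    and a_0: "\<And>i. i < n \<Longrightarrow> a i 0 > 0"
    and dr_C1: "\<And>i. i < n \<Longrightarrow> C1_nonneg (dr i)"
    and dr_0: "\<And>i. i < n \<Longrightarrow> dr i 0 = 0"
    and dr_incr: "\<And>i. i < n \<Longrightarrow> strict_mono_on {0<..} (dr i)"
    and dp_C1: "\<And>i. i < n \<Longrightarrow> C1_nonneg (dp i)"
    and dp_0: "\<And>i. i < n \<Longrightarrow> dp i 0 = 0"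
    and dp_incr: "\<And>i. i < n \<Longrightarrow> strict_mono_on {0<..} (dp i)"
    and k_C1: "\<And>i. i < n \<Longrightarrow> C1_nonneg (k i)"
    and k_0: "\<And>i. i < n \<Longrightarrow> k i 0 = 0"
    and k_incr: "\<And>i. i < n \<Longrightarrow> strict_mono_on {0<..} (k i)"
    and pos: "\<And>j. j < 2 * n \<Longrightarrow> xs j > 0"
    and steady: "\<And>j. j < 2 * n \<Longrightarrow> repressilator_field n a dr dp k xs j = 0"
  shows "stable_steady_state (2 * n) (repressilator_field n a dr dp k) xs
         \<longleftrightarrow> total_degradation n dr dp xs > total_synthesis n a k xs"
proof -
  have n: "n > 0" using assms(1) by simp
  have m: "2 * n > 0" using n by simp
  have C1: "\<And>i. i < n \<Longrightarrow> C1_nonneg (a i) \<and> C1_nonneg (dr i) \<and> C1_nonneg (dp i) \<and> C1_nonneg (k i)"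
    using a_C1 dr_C1 dp_C1 k_C1 by blast
  let ?J = "map_mat complex_of_real (jacobian (2 * n) (repressilator_field n a dr dp k) xs)"
  let ?A = "Af n dr dp xs" and ?E = "Ef n a k xs"
  define D where "D = total_degradation n dr dp xs"
  define K where "K = total_synthesis n a k xs"
  have posr: "xs i > 0" "xs (n + i) > 0" if "i < n" for i using pos that by auto
  have A_nonneg: "?A t \<ge> 0" if "t < 2 * n" for t
  proof -
    have i: "t div 2 < n" using that by auto
    show ?thesis unfolding Af_def
      using deriv_nonneg_mono[OF dr_incr[OF i] C1_deriv[OF dr_C1[OF i] posr(1)[OF i]] posr(1)[OF i]]
        deriv_nonneg_mono[OF dp_incr[OF i] C1_deriv[OF dp_C1[OF i] posr(2)[OF i]] posr(2)[OF i]]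
      by simp
  qed
  have EE: "?E (2 * i) * ?E (2 * i + 1) \<le> 0" if i: "i < n" for i
  proof -
    have P: "n + (i + n - 1) mod n < 2 * n" using n by simp
    have c: "deriv (a i) (xs (n + (i + n - 1) mod n)) \<le> 0"
      using deriv_nonpos_anti[OF a_decr[OF i] C1_deriv[OF a_C1[OF i] pos[OF P]] pos[OF P]] by simp
    have kk: "deriv (k i) (xs i) \<ge> 0"
      using deriv_nonneg_mono[OF k_incr[OF i] C1_deriv[OF k_C1[OF i] posr(1)[OF i]] posr(1)[OF i]] .
    show ?thesis unfolding Ef_def using c kk by (simp add: mult_nonpos_nonneg)
  qed
  have Dprod: "D = (\<Prod>t<2 * n. ?A t)"
    unfolding D_def total_degradation_def prod_2n unfolding Af_def by simp
  have Kprod: "K = (\<Prod>t<2 * n. ?E t)"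
    unfolding K_def total_synthesis_def prod_2n unfolding Ef_def by (simp add: mult.commute)
  have K_nonneg: "K \<ge> 0"
  proof -
    have "K = (\<Prod>i<n. - (- (?E (2 * i) * ?E (2 * i + 1))))" unfolding Kprod prod_2n by simp
    also have "\<dots> = (\<Prod>i<n. - (?E (2 * i) * ?E (2 * i + 1)))"
      unfolding prod_uminus using assms(2) by simp
    also have "\<dots> \<ge> 0" using EE by (intro prod_nonneg) (simp add: )
    finally show ?thesis .
  qed
  show ?thesis
  proof
    assume st: "stable_steady_state (2 * n) (repressilator_field n a dr dp k) xs"
    show "total_degradation n dr dp xs > total_synthesis n a k xs"
    proof (rule ccontr)
      assume "\<not> ?thesis"
      hence DK: "D \<le> K" unfolding D_def K_def by simp
      define g where "g x = (\<Prod>t<2 * n. x + ?A t) - K" for x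
      define M where "M = 1 + K"
      have g0: "g 0 \<le> 0" unfolding g_def using DK Dprod by simp
      have gM: "0 \<le> g M"
      proof -
        have "M ^ 1 \<le> M ^ (2 * n)" using power_increasing[of 1 "2 * n" M] K_nonneg n M_def by simp
        also have "\<dots> = (\<Prod>t<2 * n. M)" by simp
        also have "\<dots> \<le> (\<Prod>t<2 * n. M + ?A t)"
          using A_nonneg K_nonneg M_def by (intro prod_mono) auto
        finally show ?thesis unfolding g_def M_def by simp
      qed
      have "continuous_on {0..M} g" unfolding g_def by (intro continuous_intros)
      then obtain lam where lam: "lam \<ge> 0" "g lam = 0"
        using IVT'[of g 0 0 M] g0 gM K_nonneg M_def by auto
      have "(\<Prod>t<2 * n. lam + ?A t) = (\<Prod>t<2 * n. ?E t)" using lam Kprod unfolding g_def by simp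
      hence "complex_of_real (\<Prod>t<2 * n. lam + ?A t) = complex_of_real (\<Prod>t<2 * n. ?E t)" by simp
      hence "(\<Prod>t<2 * n. complex_of_real lam + complex_of_real (?A t)) = (\<Prod>t<2 * n. complex_of_real (?E t))"
        by (simp add: of_real_prod)
      then obtain u where u: "\<exists>t<2 * n. u t \<noteq> 0"
        and ueq: "\<forall>t<2 * n. (complex_of_real lam + complex_of_real (?A t)) * u t
                     = complex_of_real (?E t) * u ((t + 2 * n - 1) mod (2 * n))"
        using cyc_exists[OF m] by blast
      define v where "v = vec (2 * n) (\<lambda>j. u (posf n j))"
      have v: "v \<in> carrier_vec (2 * n)" unfolding v_def by simp
      have uv: "u t = v $ ixf n t" if "t < 2 * n" for t
        unfolding v_def using that ixf_lt posf_ixf by simp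
      have ev: "?J *\<^sub>v v = complex_of_real lam \<cdot>\<^sub>v v"
        using eig_cyc[where a=a and dr=dr and dp=dp and k=k and xs=xs, OF n C1 pos v uv] ueq by blast
      have vnz: "v \<noteq> 0\<^sub>v (2 * n)"
      proof
        assume "v = 0\<^sub>v (2 * n)"
        with u uv ixf_lt show False by auto
      qed
      have dimJ: "dim_row ?J = 2 * n" unfolding jacobian_def by simp
      have "eigenvalue ?J (complex_of_real lam)"
        unfolding eigenvalue_def eigenvector_def dimJ using v vnz ev by blast
      hence "Re (complex_of_real lam) < 0" using st unfolding stable_steady_state_def by blast
      with lam show False by simp
    qed
  next
    assume "total_degradation n dr dp xs > total_synthesis n a k xs"
    hence DK: "D > K" unfolding D_def K_def by simp
    have A_pos: "?A t > 0" if "t < 2 * n" for t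
    proof -
      have "D \<noteq> 0" using DK K_nonneg by simp
      hence "?A t \<noteq> 0" using that unfolding Dprod by (auto simp: prod_zero_iff)
      thus ?thesis using A_nonneg[OF that] by simp
    qed
    show "stable_steady_state (2 * n) (repressilator_field n a dr dp k) xs"
      unfolding stable_steady_state_def
    proof (intro allI impI)
      fix e assume "eigenvalue ?J e"
      then obtain v where v: "v \<in> carrier_vec (2 * n)" and vnz: "v \<noteq> 0\<^sub>v (2 * n)"
        and ev: "?J *\<^sub>v v = e \<cdot>\<^sub>v v"
        unfolding eigenvalue_def eigenvector_def jacobian_def by auto
      show "Re e < 0"
      proof (rule ccontr)
        assume "\<not> Re e < 0"
        hence Re: "Re e \<ge> 0" by simp
        define u where "u t = v $ ixf n t" for t
        have ueq: "\<forall>t<2 * n. (e + complex_of_real (?A t)) * u t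
                     = complex_of_real (?E t) * u ((t + 2 * n - 1) mod (2 * n))"
          using eig_cyc[where a=a and dr=dr and dp=dp and k=k and xs=xs and u=u, OF n C1 pos v] ev
          unfolding u_def by blast
        obtain j where j: "j < 2 * n" "v $ j \<noteq> 0"
          using vnz v by (metis carrier_vecD eq_vecI index_zero_vec(1,2))
        have unz: "u (posf n j) \<noteq> 0" "posf n j < 2 * n"
          unfolding u_def using j ixf_posf posf_lt by auto
        have dnz: "e + complex_of_real (?A t) \<noteq> 0" if "t < 2 * n" for t
        proof -
          have "Re (e + complex_of_real (?A t)) > 0" using Re A_pos[OF that] by simp
          thus ?thesis by (metis less_irrefl zero_complex.sel(1))
        qed
        have PP: "(\<Prod>t<2 * n. e + complex_of_real (?A t)) = (\<Prod>t<2 * n. complex_of_real (?E t))"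
          by (rule cyc_prod[where u=u and d="\<lambda>t. e + complex_of_real (?A t)" and e="\<lambda>t. complex_of_real (?E t)", OF m _ dnz unz(2) unz(1)]) (use ueq in blast)
        have "D \<le> (\<Prod>t<2 * n. cmod (e + complex_of_real (?A t)))"
          unfolding Dprod
        proof (rule prod_mono)
          fix t assume "t \<in> {..<2 * n}"
          hence t: "t < 2 * n" by simp
          have "?A t \<le> Re (e + complex_of_real (?A t))" using Re by simp
          also have "\<dots> \<le> cmod (e + complex_of_real (?A t))" by (rule complex_Re_le_cmod)
          finally show "0 \<le> ?A t \<and> ?A t \<le> cmod (e + complex_of_real (?A t))"
            using A_nonneg[OF t] by simp
        qed
        also have "\<dots> = cmod (\<Prod>t<2 * n. e + complex_of_real (?A t))"
          by (simp add: prod_norm)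
        also have "\<dots> = cmod (complex_of_real K)" unfolding PP Kprod by (simp add: of_real_prod)
        also have "\<dots> = K" using K_nonneg by simp
        finally show False using DK by simp
      qed
    qed
  qed
qed
end
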